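(* If $C_1,C_2\subseteq\mathbb{F}_2^n$ are binary linear constant weight codes of the same dimension and the same weight, then they are permutation equivalent, i.e. there is $\sigma\in S_n$ with $\sigma(C_1)=C_2$.
   Context: A binary linear code of length $n$ is an $\mathbb{F}_2$-subspace of $\mathbb{F}_2^n$; it is a constant weight code of weight $w$ if every non-zero codeword has Hamming weight $w$. The symmetric group $S_n$ acts on $\mathbb{F}_2^n$ by $\sigma(v_1,\dots,v_n)=(v_{\sigma^{-1}(1)},\dots,v_{\sigma^{-1}(n)})$. *)

theory Defs
  imports "HOL-Analysis.Analysis" "HOL-Library.Z2"
begin

text \<open>Binary words of length n are elements of \<open>bit ^ 'n\<close> with \<open>CARD('n) = n\<close>;
  \<open>bit\<close> is the field with two elements (HOL-Library.Z2).\<close>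

definition hamming_weight :: "bit ^ 'n \<Rightarrow> nat" where
  "hamming_weight v = card {i. v $ i \<noteq> 0}"

definition binary_linear_code :: "(bit ^ 'n) set \<Rightarrow> bool" where
  "binary_linear_code C \<longleftrightarrow> vec.subspace C"

definition constant_weight_code :: "(bit ^ 'n) set \<Rightarrow> nat \<Rightarrow> bool" where
  "constant_weight_code C w \<longleftrightarrow> (\<forall>c\<in>C. c \<noteq> 0 \<longrightarrow> hamming_weight c = w)"

definition perm_act :: "('n \<Rightarrow> 'n) \<Rightarrow> bit ^ 'n \<Rightarrow> bit ^ 'n" where
  "perm_act \<sigma> v = (\<chi> i. v $ (inv \<sigma> i))"

end

theory Submission imports Defs begin

lemma UNIV_bit: "(UNIV :: bit set) = {0, 1}"
  by (auto intro: bit.exhaust)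

instance bit :: finite
  by standard (simp add: UNIV_bit)

lemma iso_exists:
  fixes C1 C2 :: "(bit ^ 'n) set"
  assumes s1: "vec.subspace C1" and s2: "vec.subspace C2" and d: "vec.dim C1 = vec.dim C2"
  shows "\<exists>\<phi>. Vector_Spaces.linear (*s) (*s) \<phi> \<and> inj \<phi> \<and> \<phi> ` C1 = C2"
proof -
  obtain B1 where B1: "B1 \<subseteq> C1" "vec.independent B1" "C1 \<subseteq> vec.span B1"
    by (rule vec.maximal_independent_subset)
  obtain B2 where B2: "B2 \<subseteq> C2" "vec.independent B2" "C2 \<subseteq> vec.span B2"
    by (rule vec.maximal_independent_subset)
  have sp1: "vec.span B1 = C1" using B1 s1 vec.span_minimal by blast
  have sp2: "vec.span B2 = C2" using B2 s2 vec.span_minimal by blast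
  have "card B1 = card B2" using B1 B2 d vec.basis_card_eq_dim by metis
  then obtain f where f: "bij_betw f B1 B2"
    using finite_same_card_bij[OF vec.finiteI_independent[OF B1(2)] vec.finiteI_independent[OF B2(2)]] by blast
  then have "f ` B1 = B2" "inj_on f B1" by (auto simp: bij_betw_def)
  then obtain g where g: "Vector_Spaces.linear (*s) (*s) g" "inj g" "\<forall>x\<in>B1. g x = f x"
    using vec.linear_independent_extend_inj[of B1 f] B1 B2 by auto
  have "g ` B1 = B2" using g(3) \<open>f ` B1 = B2\<close> by (auto simp: image_def)
  then have "g ` C1 = C2"
    using vec.linear_span_image[OF g(1), of B1] sp1 sp2 by simp
  with g show ?thesis by blast
qed

lemma fiber_bij:
  fixes F :: "'a::finite \<Rightarrow> 'k" and G :: "'a \<Rightarrow> 'k"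
  assumes "\<And>k. card {i. F i = k} = card {j. G j = k}"
  shows "\<exists>\<sigma>. \<sigma> permutes (UNIV :: 'a set) \<and> (\<forall>i. G (\<sigma> i) = F i)"
proof -
  have "\<forall>k. \<exists>b. bij_betw b {i. F i = k} {j. G j = k}"
  proof
    fix k show "\<exists>b. bij_betw b {i. F i = k} {j. G j = k}"
      by (rule finite_same_card_bij) (simp_all add: assms)
  qed
  then obtain b where b: "\<And>k. bij_betw (b k) {i. F i = k} {j. G j = k}" by metis
  define \<sigma> where "\<sigma> i = b (F i) i" for i
  have G: "G (\<sigma> i) = F i" for i
    using b[of "F i"] unfolding \<sigma>_def bij_betw_def by auto
  have "inj \<sigma>"
  proof (rule injI)
    fix x y assume e: "\<sigma> x = \<sigma> y"
    then have "F x = F y" using G by metis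
    then show "x = y" using e b[of "F x"] unfolding \<sigma>_def bij_betw_def inj_on_def by auto
  qed
  then have "bij \<sigma>" by (simp add: bij_def finite_UNIV_inj_surj)
  then have "\<sigma> permutes UNIV" using bij_imp_permutes[of \<sigma> UNIV] by simp
  with G show ?thesis by blast
qed

definition chi :: "bit \<Rightarrow> int" where "chi b = (if b = 0 then 1 else -1)"

lemma chi_add: "chi (a + b) = chi a * chi b"
  by (cases a; cases b) (simp_all add: chi_def)

lemma vec_add_self: "(c :: bit ^ 'n) + c = 0"
  by (simp add: vec_eq_iff)

lemma char_sum_zero:
  fixes V :: "(bit ^ 'm) set" and \<psi> :: "bit ^ 'm \<Rightarrow> bit"
  assumes cl: "\<And>x y. x \<in> V \<Longrightarrow> y \<in> V \<Longrightarrow> x + y \<in> V"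
    and add: "\<And>x y. x \<in> V \<Longrightarrow> y \<in> V \<Longrightarrow> \<psi> (x + y) = \<psi> x + \<psi> y"
    and c0: "c0 \<in> V" "\<psi> c0 \<noteq> 0"
  shows "(\<Sum>c\<in>V. chi (\<psi> c)) = 0"
proof -
  have "(\<Sum>c\<in>V. chi (\<psi> c)) = (\<Sum>c\<in>V. chi (\<psi> (c + c0)))"
    by (rule sum.reindex_bij_witness[of _ "\<lambda>c. c + c0" "\<lambda>c. c + c0"])
       (auto simp: cl c0 add.assoc vec_add_self)
  also have "\<dots> = (\<Sum>c\<in>V. - chi (\<psi> c))"
    using c0 by (intro sum.cong) (auto simp: add chi_add chi_def)
  finally show ?thesis by (simp add: sum_negf)
qed

lemma char_sum:
  fixes V :: "(bit ^ 'm) set" and \<psi> :: "bit ^ 'm \<Rightarrow> bit"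
  assumes cl: "\<And>x y. x \<in> V \<Longrightarrow> y \<in> V \<Longrightarrow> x + y \<in> V"
    and add: "\<And>x y. x \<in> V \<Longrightarrow> y \<in> V \<Longrightarrow> \<psi> (x + y) = \<psi> x + \<psi> y"
  shows "(\<Sum>c\<in>V. chi (\<psi> c)) = (if \<forall>c\<in>V. \<psi> c = 0 then int (card V) else 0)"
proof (cases "\<forall>c\<in>V. \<psi> c = 0")
  case True then show ?thesis by (simp add: chi_def)
next
  case False then show ?thesis using char_sum_zero[OF cl add] by auto
qed

lemma chi_sum_weight:
  fixes f :: "'n::finite \<Rightarrow> bit"
  shows "(\<Sum>i\<in>UNIV. chi (f i)) = int CARD('n) - 2 * int (card {i. f i \<noteq> 0})"
proof -
  have "(\<Sum>i\<in>UNIV. chi (f i)) = (\<Sum>i\<in>UNIV. 1 - 2 * (if f i \<noteq> 0 then 1 else 0))"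
    by (intro sum.cong) (auto simp: chi_def)
  also have "\<dots> = int CARD('n) - 2 * int (card {i. f i \<noteq> 0})"
    by (simp add: sum_subtractf sum_distrib_left[symmetric] sum.If_cases)
  finally show ?thesis .
qed

lemma count_lemma:
  fixes V :: "(bit ^ 'm) set" and f g :: "'n::finite \<Rightarrow> bit ^ 'm \<Rightarrow> bit" and h :: "bit ^ 'm \<Rightarrow> bit"
  assumes fin: "finite V" and z: "0 \<in> V"
    and cl: "\<And>x y. x \<in> V \<Longrightarrow> y \<in> V \<Longrightarrow> x + y \<in> V"
    and fadd: "\<And>i x y. x \<in> V \<Longrightarrow> y \<in> V \<Longrightarrow> f i (x + y) = f i x + f i y"
    and gadd: "\<And>i x y. x \<in> V \<Longrightarrow> y \<in> V \<Longrightarrow> g i (x + y) = g i x + g i y"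
    and hadd: "\<And>x y. x \<in> V \<Longrightarrow> y \<in> V \<Longrightarrow> h (x + y) = h x + h y"
    and wt: "\<And>c. c \<in> V \<Longrightarrow> card {i. f i c \<noteq> 0} = card {j. g j c \<noteq> 0}"
  shows "card {i. \<forall>c\<in>V. f i c = h c} = card {j. \<forall>c\<in>V. g j c = h c}"
proof -
  have key: "int (card V) * int (card {i. \<forall>c\<in>V. k i c = h c})
      = (\<Sum>c\<in>V. chi (h c) * (\<Sum>i\<in>UNIV. chi (k i c)))"
    if kadd: "\<And>i x y. x \<in> V \<Longrightarrow> y \<in> V \<Longrightarrow> k i (x + y) = k i x + k i y"
    for k :: "'n \<Rightarrow> bit ^ 'm \<Rightarrow> bit"
  proof -
    have eq: "(\<forall>c\<in>V. k i c + h c = 0) = (\<forall>c\<in>V. k i c = h c)" for i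
    proof -
      have "(k i c + h c = 0) = (k i c = h c)" for c
        by (cases "k i c"; cases "h c") simp_all
      then show ?thesis by simp
    qed
    have "(\<Sum>c\<in>V. chi (h c) * (\<Sum>i\<in>UNIV. chi (k i c)))
        = (\<Sum>c\<in>V. \<Sum>i\<in>UNIV. chi (k i c + h c))"
      by (simp only: sum_distrib_left chi_add mult.commute)
    also have "\<dots> = (\<Sum>i\<in>UNIV. \<Sum>c\<in>V. chi (k i c + h c))"
      by (rule sum.swap)
    also have "\<dots> = (\<Sum>i\<in>UNIV. if \<forall>c\<in>V. k i c = h c then int (card V) else 0)"
      by (intro sum.cong refl, subst char_sum) (auto simp: cl kadd hadd eq)
    also have "\<dots> = int (card V) * int (card {i. \<forall>c\<in>V. k i c = h c})"
      by (simp add: sum.If_cases)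
    finally show ?thesis by simp
  qed
  have "int (card V) * int (card {i. \<forall>c\<in>V. f i c = h c})
      = int (card V) * int (card {j. \<forall>c\<in>V. g j c = h c})"
  proof -
    have "int (card V) * int (card {i. \<forall>c\<in>V. f i c = h c})
       = (\<Sum>c\<in>V. chi (h c) * (\<Sum>i\<in>UNIV. chi (f i c)))" by (rule key) (rule fadd)
    also have "\<dots> = (\<Sum>c\<in>V. chi (h c) * (\<Sum>i\<in>UNIV. chi (g i c)))"
      by (intro sum.cong refl) (simp only: chi_sum_weight wt)
    also have "\<dots> = int (card V) * int (card {j. \<forall>c\<in>V. g j c = h c})"
      by (rule key[symmetric]) (rule gadd)
    finally show ?thesis .
  qed
  moreover have "card V > 0" using fin z card_gt_0_iff by blast
  ultimately show ?thesis using z by auto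
qed

theorem theorem4p3:
  fixes C1 C2 :: "(bit ^ 'n) set" and w :: nat
  assumes "binary_linear_code C1" and "binary_linear_code C2"
    and "constant_weight_code C1 w" and "constant_weight_code C2 w"
    and "vec.dim C1 = vec.dim C2"
  shows "\<exists>\<sigma>. \<sigma> permutes (UNIV :: 'n set) \<and> perm_act \<sigma> ` C1 = C2"
proof -
  have s1: "vec.subspace C1" and s2: "vec.subspace C2"
    using assms(1,2) by (auto simp: binary_linear_code_def)
  obtain \<phi> where \<phi>: "Vector_Spaces.linear (*s) (*s) \<phi>" "inj \<phi>" "\<phi> ` C1 = C2"
    using iso_exists[OF s1 s2 assms(5)] by blast
  have ladd: "\<phi> (x + y) = \<phi> x + \<phi> y" for x y using vec.linear_add[OF \<phi>(1)] .
  have l0: "\<phi> 0 = 0" using vec.linear_0[OF \<phi>(1)] .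
  have finC1: "finite C1" by (rule finite_subset[of _ UNIV]) auto
  have wt: "card {i. c $ i \<noteq> 0} = card {j. \<phi> c $ j \<noteq> 0}" if c: "c \<in> C1" for c
  proof (cases "c = 0")
    case True then show ?thesis by (simp add: l0)
  next
    case False
    then have "\<phi> c \<noteq> 0" using \<phi>(2) l0 by (metis injD)
    moreover have "\<phi> c \<in> C2" using c \<phi>(3) by blast
    ultimately show ?thesis using assms(3,4) c False
      by (simp add: constant_weight_code_def hamming_weight_def)
  qed
  have wt': "card {i. c $ i = 1} = card {j. \<phi> c $ j = 1}" if "c \<in> C1" for c
    using wt[OF that] by simp
  define F where "F i = (\<lambda>c. if c \<in> C1 then c $ i else 0)" for i
  define G where "G j = (\<lambda>c. if c \<in> C1 then \<phi> c $ j else 0)" for j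
  have fib: "card {i. F i = k} = card {j. G j = k}" for k
  proof (cases "(\<exists>i. F i = k) \<or> (\<exists>j. G j = k)")
    case True
    then have kadd: "\<And>x y. x \<in> C1 \<Longrightarrow> y \<in> C1 \<Longrightarrow> k (x + y) = k x + k y"
      and kout: "\<And>c. c \<notin> C1 \<Longrightarrow> k c = 0"
      by (auto simp: F_def G_def ladd vec.subspace_add[OF s1])
    have e1: "{i. F i = k} = {i. \<forall>c\<in>C1. c $ i = k c}"
      using kout by (auto simp: F_def fun_eq_iff)
    have e2: "{j. G j = k} = {j. \<forall>c\<in>C1. \<phi> c $ j = k c}"
      using kout by (auto simp: G_def fun_eq_iff)
    show ?thesis unfolding e1 e2
      by (rule count_lemma[where f="\<lambda>i c. c $ i" and g="\<lambda>j c. \<phi> c $ j"])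
         (auto simp: finC1 vec.subspace_0[OF s1] vec.subspace_add[OF s1] ladd kadd wt')
  next
    case False then show ?thesis by simp
  qed
  obtain \<sigma> where \<sigma>: "\<sigma> permutes (UNIV :: 'n set)" "\<forall>i. G (\<sigma> i) = F i"
    using fiber_bij[of F G] fib by blast
  have pa: "perm_act \<sigma> c = \<phi> c" if c: "c \<in> C1" for c
  proof -
    have "c $ (inv \<sigma> j) = \<phi> c $ j" for j
    proof -
      have "G (\<sigma> (inv \<sigma> j)) c = F (inv \<sigma> j) c" using \<sigma>(2) by simp
      then show ?thesis using c permutes_inverses(1)[OF \<sigma>(1)] by (simp add: F_def G_def)
    qed
    then show ?thesis by (simp add: perm_act_def vec_eq_iff)
  qed
  have "perm_act \<sigma> ` C1 = \<phi> ` C1" using pa by (auto simp: image_def)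
  with \<sigma>(1) \<phi>(3) show ?thesis by blast
qed

end
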